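(* Let $(\Omega,\mathcal F,\mathbb P)$ be a probability space, let $\mathfrak d,N\in\mathbb N$, $a\in\mathbb R$, $b\in(a,\infty)$, $\vartheta\in[a,b]^{\mathfrak d}$, $L,\varepsilon\in(0,\infty)$, let $\mathfrak E\colon[a,b]^{\mathfrak d}\times\Omega\to\mathbb R$ be $(\mathcal B([a,b]^{\mathfrak d})\otimes\mathcal F)/\mathcal B(\mathbb R)$-measurable with $|\mathfrak E(x,\omega)-\mathfrak E(y,\omega)|\le L\|x-y\|_\infty$ for all $x,y\in[a,b]^{\mathfrak d}$, $\omega\in\Omega$, and let $\Theta_n\colon\Omega\to[a,b]^{\mathfrak d}$, $n\in\{1,\dots,N\}$, be i.i.d. random variables with $\Theta_1$ continuous uniformly distributed on $[a,b]^{\mathfrak d}$. Then, writing $\mathfrak E(\Theta_n)$ for $\omega\mapsto\mathfrak E(\Theta_n(\omega),\omega)$, $$\mathbb P\Bigl(\bigl[\min_{n\in\{1,\dots,N\}}\mathfrak E(\Theta_n)\bigr]-\mathfrak E(\vartheta)>\varepsilon\Bigr)\le\exp\Bigl(-N\min\Bigl\{1,\frac{\varepsilon^{\mathfrak d}}{L^{\mathfrak d}(b-a)^{\mathfrak d}}\Bigr\}\Bigr).$$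
   Context: $\|\cdot\|_\infty$ is the maximum norm on $\mathbb R^{\mathfrak d}$. *)

theory Defs
  imports "HOL-Probability.Probability"
begin

definition cube :: "real \<Rightarrow> real \<Rightarrow> (real ^ 'd) set" where
  "cube a b = {x. \<forall>i. a \<le> x $ i \<and> x $ i \<le> b}"

end

theory Submission
  imports Defs
begin

lemma cube_cbox: "cube a b = cbox (\<chi> i. a) (\<chi> i. b :: real^'d)"
  by (auto simp: cube_def mem_box_cart)

lemma infnorm_le_cart:
  fixes x :: "real^'d"
  assumes "\<And>i. \<bar>x $ i\<bar> \<le> r"
  shows "infnorm x \<le> r"
  unfolding infnorm_cart
  by (rule cSup_least) (use assms in auto)

lemma content_lower:
  fixes u v :: "real^'d"
  assumes "\<And>i. u $ i \<le> v $ i" "\<And>i. m \<le> v $ i - u $ i" "0 \<le> m"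
  shows "m ^ CARD('d) \<le> measure lborel (cbox u v)"
proof -
  have "u \<in> cbox u v" using assms(1) by (auto simp: mem_box_cart)
  hence ne: "cbox u v \<noteq> {}" by blast
  have "m ^ CARD('d) = (\<Prod>i\<in>(UNIV::'d set). m)" by simp
  also have "\<dots> \<le> (\<Prod>i\<in>(UNIV::'d set). v $ i - u $ i)"
    by (rule prod_mono) (use assms in auto)
  also have "\<dots> = measure lborel (cbox u v)" using content_cbox_cart[OF ne] by simp
  finally show ?thesis .
qed

theorem lemma3p23:
  fixes M :: "'w measure"
    and N :: nat and a b L \<epsilon> :: real
    and \<theta>0 :: "real ^ 'd"
    and E :: "(real ^ 'd) \<times> 'w \<Rightarrow> real"
    and \<Theta> :: "nat \<Rightarrow> 'w \<Rightarrow> real ^ 'd"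
  assumes "prob_space M"
    and "N \<ge> 1"
    and "a < b"
    and "\<theta>0 \<in> cube a b"
    and "L > 0" and "\<epsilon> > 0"
    and "E \<in> borel_measurable (restrict_space borel (cube a b) \<Otimes>\<^sub>M M)"
    and "\<And>x y \<omega>. x \<in> cube a b \<Longrightarrow> y \<in> cube a b \<Longrightarrow> \<omega> \<in> space M \<Longrightarrow>
           \<bar>E (x, \<omega>) - E (y, \<omega>)\<bar> \<le> L * infnorm (x - y)"
    and "\<And>n. n \<in> {1..N} \<Longrightarrow> \<Theta> n \<in> measurable M (restrict_space borel (cube a b))"
    and "prob_space.indep_vars M (\<lambda>_. restrict_space borel (cube a b)) \<Theta> {1..N}"
    and "\<And>n. n \<in> {1..N} \<Longrightarrow>
           distr M (restrict_space borel (cube a b)) (\<Theta> n) = distr M (restrict_space borel (cube a b)) (\<Theta> 1)"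
    and "distr M lborel (\<Theta> 1) = uniform_measure lborel (cube a b)"
  shows "measure M {\<omega> \<in> space M.
            Min ((\<lambda>n. E (\<Theta> n \<omega>, \<omega>)) ` {1..N}) - E (\<theta>0, \<omega>) > \<epsilon>}
         \<le> exp (- real N * min 1 (\<epsilon> ^ CARD('d) / (L ^ CARD('d) * (b - a) ^ CARD('d))))"
proof -
  interpret P: prob_space M by fact
  note assms' = assms
  define r where "r = \<epsilon> / L"
  have r: "r > 0" using assms by (simp add: r_def)
  define u :: "real^'d" where "u = (\<chi> i. max a (\<theta>0 $ i - r))"
  define v :: "real^'d" where "v = (\<chi> i. min b (\<theta>0 $ i + r))"
  define K where "K = cbox u v"
  define Q :: "(real^'d) set" where "Q = cube a b"
  define C where "C = Q - K"
  define R where "R = restrict_space borel Q"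
  define S where "S = {\<omega> \<in> space M.
            Min ((\<lambda>n. E (\<Theta> n \<omega>, \<omega>)) ` {1..N}) - E (\<theta>0, \<omega>) > \<epsilon>}"
  define T where "T = (\<Inter>n\<in>{1..N}. \<Theta> n -` C \<inter> space M)"
  define m where "m = min r (b - a)"
  define d where "d = CARD('d)"
  have th0: "\<And>i. a \<le> \<theta>0 $ i \<and> \<theta>0 $ i \<le> b" using assms(4) by (auto simp: cube_def)
  have KQ: "K \<subseteq> Q" by (auto simp: K_def Q_def cube_def mem_box_cart u_def v_def)
  have Qsets: "Q \<in> sets borel" by (simp add: Q_def cube_cbox)
  have Ksets: "K \<in> sets borel" by (simp add: K_def)
  have Csets: "C \<in> sets R"
    unfolding R_def C_def using Qsets Ksets by (subst sets_restrict_space_iff) auto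
  have KsetsR: "K \<in> sets R"
    unfolding R_def using Qsets Ksets KQ by (subst sets_restrict_space_iff) auto
  have meas: "\<And>n. n \<in> {1..N} \<Longrightarrow> \<Theta> n \<in> measurable M R" using assms(9) by (simp add: R_def Q_def)
  have inQ: "\<And>n \<omega>. n \<in> {1..N} \<Longrightarrow> \<omega> \<in> space M \<Longrightarrow> \<Theta> n \<omega> \<in> Q"
    using meas unfolding R_def by (auto simp: measurable_restrict_space2_iff)
  have one: "1 \<in> {1..N}" using assms(2) by simp
  have ST: "S \<subseteq> T"
  proof
    fix \<omega> assume w: "\<omega> \<in> S"
    hence wM: "\<omega> \<in> space M" by (simp add: S_def)
    show "\<omega> \<in> T" unfolding T_def
    proof (intro INT_I IntI vimageI2 wM)
      fix n assume n: "n \<in> {1..N}"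
      have "Min ((\<lambda>n. E (\<Theta> n \<omega>, \<omega>)) ` {1..N}) \<le> E (\<Theta> n \<omega>, \<omega>)"
        using n by (intro Min_le) auto
      hence "E (\<Theta> n \<omega>, \<omega>) - E (\<theta>0, \<omega>) > \<epsilon>" using w by (simp add: S_def)
      moreover have "\<bar>E (\<Theta> n \<omega>, \<omega>) - E (\<theta>0, \<omega>)\<bar> \<le> L * infnorm (\<Theta> n \<omega> - \<theta>0)"
        using assms(8)[of "\<Theta> n \<omega>" \<theta>0 \<omega>] inQ[OF n wM] assms(4) wM by (simp add: Q_def)
      ultimately have "L * infnorm (\<Theta> n \<omega> - \<theta>0) > L * r" using assms(5) by (simp add: r_def)
      hence big: "infnorm (\<Theta> n \<omega> - \<theta>0) > r" using assms(5) by simp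
      have "\<Theta> n \<omega> \<notin> K"
      proof
        assume H: "\<Theta> n \<omega> \<in> K"
        have "\<bar>(\<Theta> n \<omega> - \<theta>0) $ i\<bar> \<le> r" for i
        proof -
          have "u $ i \<le> \<Theta> n \<omega> $ i \<and> \<Theta> n \<omega> $ i \<le> v $ i"
            using H unfolding K_def mem_box_cart by (rule spec)
          thus ?thesis by (simp add: u_def v_def abs_le_iff)
        qed
        hence "infnorm (\<Theta> n \<omega> - \<theta>0) \<le> r" by (rule infnorm_le_cart)
        thus False using big by simp
      qed
      thus "\<Theta> n \<omega> \<in> C" using inQ[OF n wM] by (simp add: C_def)
    qed
  qed
  have indep: "P.indep_sets (\<lambda>i. { \<Theta> i -` A \<inter> space M | A. A \<in> sets R}) {1..N}"
    using assms(10) unfolding P.indep_vars_def2 R_def Q_def by simp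
  have probT: "P.prob T = (\<Prod>n\<in>{1..N}. P.prob (\<Theta> n -` C \<inter> space M))"
    unfolding T_def using one Csets by (intro P.indep_setsD[OF indep]) auto
  have same: "P.prob (\<Theta> n -` C \<inter> space M) = P.prob (\<Theta> 1 -` C \<inter> space M)" if n: "n \<in> {1..N}" for n
  proof -
    have "P.prob (\<Theta> n -` C \<inter> space M) = measure (distr M R (\<Theta> n)) C"
      using meas[OF n] Csets by (simp add: measure_distr)
    also have "\<dots> = measure (distr M R (\<Theta> 1)) C" using assms(11)[OF n] by (simp add: R_def Q_def)
    also have "\<dots> = P.prob (\<Theta> 1 -` C \<inter> space M)"
      using meas[OF one] Csets by (simp add: measure_distr)
    finally show ?thesis .
  qed
  define q where "q = P.prob (\<Theta> 1 -` K \<inter> space M)"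
  have compl: "P.prob (\<Theta> 1 -` C \<inter> space M) = 1 - q"
  proof -
    have "\<Theta> 1 -` C \<inter> space M = space M - (\<Theta> 1 -` K \<inter> space M)"
      using inQ[OF one] by (auto simp: C_def)
    moreover have "\<Theta> 1 -` K \<inter> space M \<in> P.events"
      using meas[OF one] KsetsR by (rule measurable_sets)
    ultimately show ?thesis by (simp add: P.prob_compl q_def)
  qed
  have probT2: "P.prob T = (1 - q) ^ N"
  proof -
    have "P.prob T = (\<Prod>n\<in>{1..N}. 1 - q)"
      unfolding probT using same compl by (intro prod.cong) auto
    thus ?thesis by simp
  qed
  have measQ: "measure lborel Q = (b - a) ^ d"
  proof -
    have "(\<chi> i. a) \<in> cbox (\<chi> i. a) (\<chi> i. b :: real^'d)" using assms(3)
      by (auto simp: mem_box_cart)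
    hence "cbox (\<chi> i. a) (\<chi> i. b :: real^'d) \<noteq> {}" by blast
    thus ?thesis unfolding Q_def cube_cbox d_def by (simp add: content_cbox_cart)
  qed
  have qeq: "q = measure lborel K / (b - a) ^ d"
  proof -
    have mb: "\<Theta> 1 \<in> measurable M lborel"
      using meas[OF one] unfolding R_def by (auto simp: measurable_restrict_space2_iff)
    have "q = measure (distr M lborel (\<Theta> 1)) K"
      using mb Ksets by (simp add: measure_distr q_def)
    also have "\<dots> = measure (uniform_measure lborel Q) K" using assms(12) by (simp add: Q_def)
    also have "\<dots> = measure lborel (Q \<inter> K) / measure lborel Q"
    proof (rule measure_uniform_measure)
      have fin: "emeasure lborel Q \<noteq> \<infinity>"
        unfolding Q_def cube_cbox using emeasure_lborel_cbox_finite by (simp add: less_top)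
      show "emeasure lborel Q \<noteq> \<infinity>" by fact
      have "measure lborel Q > 0" using measQ assms(3) by simp
      thus "emeasure lborel Q \<noteq> 0" using emeasure_eq_ennreal_measure[of lborel Q] fin by auto
      show "K \<in> sets lborel" using Ksets by simp
    qed
    also have "\<dots> = measure lborel K / (b - a) ^ d" using KQ measQ by (simp add: Int_absorb1)
    finally show ?thesis .
  qed
  have m0: "0 \<le> m" using r assms(3) by (simp add: m_def)
  have Klow: "m ^ d \<le> measure lborel K"
    unfolding K_def d_def
  proof (rule content_lower)
    fix i
    show "u $ i \<le> v $ i" using th0[of i] r assms(3) by (auto simp: u_def v_def)
    show "m \<le> v $ i - u $ i" using th0[of i] r assms(3) by (auto simp: u_def v_def m_def)
  qed (rule m0)
  define p where "p = min 1 (\<epsilon> ^ CARD('d) / (L ^ CARD('d) * (b - a) ^ CARD('d)))"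
  have pq: "p \<le> q"
  proof -
    have ba: "b - a > 0" using assms(3) by simp
    have "p = min 1 ((r / (b - a)) ^ d)"
      by (simp add: p_def r_def d_def power_divide power_mult_distrib mult.commute)
    also have "\<dots> = (min 1 (r / (b - a))) ^ d"
    proof (cases "r / (b - a) \<le> 1")
      case True
      have "(r / (b - a)) ^ d \<le> 1" using True r ba by (intro power_le_one) auto
      thus ?thesis using True by (simp add: min_def)
    next
      case False
      have "1 \<le> (r / (b - a)) ^ d" using False by (intro one_le_power) auto
      thus ?thesis using False by (simp add: min_def)
    qed
    also have "min 1 (r / (b - a)) = m / (b - a)"
      using ba by (auto simp: m_def min_def field_simps)
    also have "(m / (b - a)) ^ d = m ^ d / (b - a) ^ d" by (simp add: power_divide)
    also have "\<dots> \<le> q" unfolding qeq using Klow ba by (intro divide_right_mono) auto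
    finally show ?thesis .
  qed
  have p0: "0 \<le> p" using assms(5,6,3) by (simp add: p_def)
  have q1: "q \<le> 1" by (simp add: q_def)
  have "P.prob T \<le> (1 - p) ^ N" unfolding probT2
    using pq q1 by (intro power_mono) auto
  also have "\<dots> \<le> exp (- p) ^ N"
    using pq q1 by (intro power_mono) (auto simp: add.commute[of 1] exp_ge_add_one_self[of "-p", simplified])
  also have "\<dots> = exp (- real N * p)" by (simp add: exp_of_nat_mult[symmetric])
  finally have Tb: "P.prob T \<le> exp (- real N * p)" .
  have "P.prob S \<le> P.prob T"
  proof (cases "S \<in> P.events")
    case True
    have "T \<in> P.events" unfolding T_def using one
      by (intro sets.finite_INT) (auto intro: measurable_sets[OF meas Csets])
    thus ?thesis using True ST by (intro P.finite_measure_mono)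
  next
    case False
    thus ?thesis by (simp add: measure_notin_sets)
  qed
  thus ?thesis using Tb by (simp add: S_def p_def)
qed

end
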